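(* For each $n \in \{97, 193, 289\}$, there exists a Shrikhande-graph-design of order $n$. That is, for each such $n$, the edge set of the complete graph $K_n$ can be partitioned into $n(n-1)/96$ subgraphs, each isomorphic to the Shrikhande graph.
   Context: The Shrikhande graph is the Cayley graph on the group $\mathbb{Z}_4 \times \mathbb{Z}_4$ with connection set $\{\pm(1,0), \pm(0,1), \pm(1,1)\}$. It is a 6-regular graph on 16 vertices with 48 edges. *)

theory Defs
  imports Main
begin

text \<open>Shrikhande graph: Cayley graph on Z4 x Z4 (elements represented as pairs of
integers in {0..3}) with connection set {+-(1,0), +-(0,1), +-(1,1)}.\<close>

definition shrikhande_vertices :: "(int \<times> int) set" where
  "shrikhande_vertices = {0..3} \<times> {0..3}"

definition shrikhande_conn :: "(int \<times> int) set" where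
  "shrikhande_conn = {(1,0), (3,0), (0,1), (0,3), (1,1), (3,3)}"

definition shrikhande_adj :: "int \<times> int \<Rightarrow> int \<times> int \<Rightarrow> bool" where
  "shrikhande_adj u v \<longleftrightarrow>
     ((fst v - fst u) mod 4, (snd v - snd u) mod 4) \<in> shrikhande_conn"

definition shrikhande_edges :: "(int \<times> int) set set" where
  "shrikhande_edges = {{u, v} | u v. u \<in> shrikhande_vertices \<and> v \<in> shrikhande_vertices
                                       \<and> shrikhande_adj u v}"

definition complete_edges :: "nat \<Rightarrow> nat set set" where
  "complete_edges n = {e. e \<subseteq> {0..<n} \<and> card e = 2}"

definition shrikhande_copy :: "nat \<Rightarrow> nat set set \<Rightarrow> bool" where
  "shrikhande_copy n H \<longleftrightarrow>
     (\<exists>f. inj_on f shrikhande_vertices \<and> f ` shrikhande_vertices \<subseteq> {0..<n}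
          \<and> H = (\<lambda>e. f ` e) ` shrikhande_edges)"

definition shrikhande_design :: "nat \<Rightarrow> nat set set set \<Rightarrow> bool" where
  "shrikhande_design n D \<longleftrightarrow>
     (\<forall>H\<in>D. shrikhande_copy n H)
     \<and> (\<forall>H1\<in>D. \<forall>H2\<in>D. H1 \<noteq> H2 \<longrightarrow> H1 \<inter> H2 = {})
     \<and> \<Union>D = complete_edges n"

end

theory Submission
  imports Defs
begin


lemma zm_pl_in: "0 < (m::nat) \<Longrightarrow> (x + t) mod m < m" by simp
lemma zm_int_mi: "a < (m::nat) \<Longrightarrow> int ((x + m - a) mod m) = (int x - int a) mod int m"
proof -
  assume "a < m"
  hence "int (x + m - a) = (int x - int a) + int m" by simp
  hence "int ((x + m - a) mod m) = ((int x - int a) + int m) mod int m" by (metis of_nat_mod)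
  thus ?thesis by simp
qed
lemma zm_int_pl: "int ((x + t) mod m) = (int x + int t) mod int m"
  by (simp add: of_nat_mod)
lemma zm_cancel1: "a < (m::nat) \<Longrightarrow> t < m \<Longrightarrow> s < m \<Longrightarrow> (a + t) mod m = (a + s) mod m \<Longrightarrow> t = s"
proof -
  assume h: "a < m" "t < m" "s < m" "(a + t) mod m = (a + s) mod m"
  hence "(int a + int t) mod int m = (int a + int s) mod int m" by (metis zm_int_pl)
  hence "((int a + int t) - int a) mod int m = ((int a + int s) - int a) mod int m" by (metis mod_diff_left_eq)
  hence "int t mod int m = int s mod int m" by simp
  thus "t = s" using h by simp
qed
lemma zm_cancel2: "a < (m::nat) \<Longrightarrow> b < m \<Longrightarrow> t < m \<Longrightarrow> (a + t) mod m = (b + t) mod m \<Longrightarrow> a = b"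
  using zm_cancel1[of t m a b] by (simp add: add.commute)
lemma zm_mi_pl: "a < (m::nat) \<Longrightarrow> b < m \<Longrightarrow> t < m \<Longrightarrow>
   ((b + t) mod m + m - (a + t) mod m) mod m = (b + m - a) mod m"
proof -
  assume h: "a < m" "b < m" "t < m"
  have "int (((b + t) mod m + m - (a + t) mod m) mod m) = (int ((b + t) mod m) - int ((a + t) mod m)) mod int m"
    using h by (simp add: zm_int_mi)
  also have "\<dots> = ((int b + int t) mod int m - (int a + int t) mod int m) mod int m" by (simp add: zm_int_pl)
  also have "\<dots> = (int b - int a) mod int m" by (simp add: mod_diff_eq)
  also have "\<dots> = int ((b + m - a) mod m)" using h by (simp add: zm_int_mi)
  finally show ?thesis by simp
qed
lemma zm_pl_mi: "a < (m::nat) \<Longrightarrow> x < m \<Longrightarrow> (a + (x + m - a) mod m) mod m = x"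
proof -
  assume h: "a < m" "x < m"
  have "int ((a + (x + m - a) mod m) mod m) = (int a + (int x - int a) mod int m) mod int m"
    using h by (simp add: zm_int_pl zm_int_mi)
  also have "\<dots> = int x" using h by (simp add: mod_add_right_eq)
  finally show ?thesis by simp
qed


definition zpl :: "nat \<Rightarrow> nat \<Rightarrow> nat \<Rightarrow> nat" where "zpl m x t = (x + t) mod m"
definition zmi :: "nat \<Rightarrow> nat \<Rightarrow> nat \<Rightarrow> nat" where "zmi m y x = (y + m - x) mod m"
definition pl2 :: "nat \<Rightarrow> nat \<Rightarrow> nat \<Rightarrow> nat" where
  "pl2 m x t = m * zpl m (x div m) (t div m) + zpl m (x mod m) (t mod m)"
definition mi2 :: "nat \<Rightarrow> nat \<Rightarrow> nat \<Rightarrow> nat" where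
  "mi2 m y x = m * zmi m (y div m) (x div m) + zmi m (y mod m) (x mod m)"

lemma comb_lt: "A < (m::nat) \<Longrightarrow> B < m \<Longrightarrow> m * A + B < m * m"
proof -
  assume "A < m" "B < m"
  hence "m * A + B < m * A + m" by simp
  also have "\<dots> = m * (A + 1)" by simp
  also have "\<dots> \<le> m * m" using \<open>A < m\<close> by (intro mult_le_mono2) simp
  finally show ?thesis .
qed
lemma comb_div: "B < (m::nat) \<Longrightarrow> (m * A + B) div m = A" by simp
lemma comb_mod: "B < (m::nat) \<Longrightarrow> (m * A + B) mod m = B" by simp
lemma hi_lt: "x < m * (m::nat) \<Longrightarrow> x div m < m"
  by (simp add: less_mult_imp_div_less)
lemma lo_lt: "x < m * (m::nat) \<Longrightarrow> x mod m < m"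
  by (metis mod_less_divisor gr_zeroI mult_0 not_less_zero)
lemma nat_split_dm: "(x::nat) = m * (x div m) + x mod m" by simp

lemma zpl_lt: "0 < m \<Longrightarrow> zpl m x t < m" by (simp add: zpl_def)
lemma zmi_lt: "0 < m \<Longrightarrow> zmi m y x < m" by (simp add: zmi_def)

lemma pl2_in: "x < m*m \<Longrightarrow> t < m*m \<Longrightarrow> pl2 m x t < m*m"
proof -
  assume h: "x < m*m" "t < m*m"
  have m: "0 < m" using h(1) by (cases m) auto
  show ?thesis unfolding pl2_def by (rule comb_lt) (simp_all add: zpl_lt[OF m])
qed
lemma mi2_in: "x < m*m \<Longrightarrow> y < m*m \<Longrightarrow> mi2 m y x < m*m"
proof -
  assume h: "x < m*m" "y < m*m"
  have m: "0 < m" using h(1) by (cases m) auto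
  show ?thesis unfolding mi2_def by (rule comb_lt) (simp_all add: zmi_lt[OF m])
qed
lemma pl2_div: "0 < m \<Longrightarrow> pl2 m x t div m = zpl m (x div m) (t div m)"
  unfolding pl2_def by (simp add: zpl_lt)
lemma pl2_mod: "0 < m \<Longrightarrow> pl2 m x t mod m = zpl m (x mod m) (t mod m)"
  unfolding pl2_def by (simp add: zpl_lt)
lemma mi2_div: "0 < m \<Longrightarrow> mi2 m x t div m = zmi m (x div m) (t div m)"
  unfolding mi2_def by (simp add: zmi_lt)
lemma mi2_mod: "0 < m \<Longrightarrow> mi2 m x t mod m = zmi m (x mod m) (t mod m)"
  unfolding mi2_def by (simp add: zmi_lt)
lemma eq_by_parts: "(x::nat) div m = y div m \<Longrightarrow> x mod m = y mod m \<Longrightarrow> x = y"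
  by (metis nat_split_dm)

lemma pl2_cancel1: "a < m*m \<Longrightarrow> t < m*m \<Longrightarrow> s < m*m \<Longrightarrow> pl2 m a t = pl2 m a s \<Longrightarrow> t = s"
proof -
  assume h: "a < m*m" "t < m*m" "s < m*m" "pl2 m a t = pl2 m a s"
  have m: "0 < m" using h(1) by (cases m) auto
  have "zpl m (a div m) (t div m) = zpl m (a div m) (s div m)" using arg_cong[OF h(4), of "\<lambda>z. z div m"] by (simp add: pl2_div[OF m])
  hence 1: "t div m = s div m" using zm_cancel1 hi_lt h unfolding zpl_def by blast
  have "zpl m (a mod m) (t mod m) = zpl m (a mod m) (s mod m)" using arg_cong[OF h(4), of "\<lambda>z. z mod m"] by (simp add: pl2_mod[OF m])
  hence 2: "t mod m = s mod m" using zm_cancel1 lo_lt h unfolding zpl_def by blast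
  show ?thesis using 1 2 by (rule eq_by_parts)
qed
lemma pl2_cancel2: "a < m*m \<Longrightarrow> b < m*m \<Longrightarrow> t < m*m \<Longrightarrow> pl2 m a t = pl2 m b t \<Longrightarrow> a = b"
proof -
  assume h: "a < m*m" "b < m*m" "t < m*m" "pl2 m a t = pl2 m b t"
  have m: "0 < m" using h(1) by (cases m) auto
  have "zpl m (a div m) (t div m) = zpl m (b div m) (t div m)" using arg_cong[OF h(4), of "\<lambda>z. z div m"] by (simp add: pl2_div[OF m])
  hence 1: "a div m = b div m" using zm_cancel2 hi_lt h unfolding zpl_def by blast
  have "zpl m (a mod m) (t mod m) = zpl m (b mod m) (t mod m)" using arg_cong[OF h(4), of "\<lambda>z. z mod m"] by (simp add: pl2_mod[OF m])
  hence 2: "a mod m = b mod m" using zm_cancel2 lo_lt h unfolding zpl_def by blast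
  show ?thesis using 1 2 by (rule eq_by_parts)
qed
lemma mi2_pl2: "a < m*m \<Longrightarrow> b < m*m \<Longrightarrow> t < m*m \<Longrightarrow> mi2 m (pl2 m b t) (pl2 m a t) = mi2 m b a"
proof -
  assume h: "a < m*m" "b < m*m" "t < m*m"
  have m: "0 < m" using h(1) by (cases m) auto
  show ?thesis unfolding mi2_def pl2_div[OF m] pl2_mod[OF m]
    using zm_mi_pl[of "a div m" m "b div m" "t div m"] zm_mi_pl[of "a mod m" m "b mod m" "t mod m"]
      hi_lt lo_lt h unfolding zpl_def zmi_def by simp
qed
lemma pl2_mi2: "a < m*m \<Longrightarrow> x < m*m \<Longrightarrow> pl2 m a (mi2 m x a) = x"
proof -
  assume h: "a < m*m" "x < m*m"
  have m: "0 < m" using h(1) by (cases m) auto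
  have "pl2 m a (mi2 m x a) = m * (x div m) + x mod m"
    unfolding pl2_def mi2_div[OF m] mi2_mod[OF m]
    using zm_pl_mi[of "a div m" m "x div m"] zm_pl_mi[of "a mod m" m "x mod m"]
      hi_lt lo_lt h unfolding zpl_def zmi_def by simp
  thus ?thesis by simp
qed
lemma pl2_0: "x < m*m \<Longrightarrow> pl2 m x 0 = x"
proof -
  assume h: "x < m*m"
  have "x div m < m" "x mod m < m" using hi_lt lo_lt h by auto
  thus ?thesis unfolding pl2_def zpl_def by simp
qed
lemma zpl_in: "x < m \<Longrightarrow> t < m \<Longrightarrow> zpl m x t < m" unfolding zpl_def by simp
lemma zmi_in: "x < m \<Longrightarrow> y < m \<Longrightarrow> zmi m y x < m" unfolding zmi_def by simp
lemma zpl_cancel1: "a < m \<Longrightarrow> t < m \<Longrightarrow> s < m \<Longrightarrow> zpl m a t = zpl m a s \<Longrightarrow> t = s"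
  unfolding zpl_def by (rule zm_cancel1)
lemma zpl_cancel2: "a < m \<Longrightarrow> b < m \<Longrightarrow> t < m \<Longrightarrow> zpl m a t = zpl m b t \<Longrightarrow> a = b"
  unfolding zpl_def by (rule zm_cancel2)
lemma zmi_zpl: "a < m \<Longrightarrow> b < m \<Longrightarrow> t < m \<Longrightarrow> zmi m (zpl m b t) (zpl m a t) = zmi m b a"
  unfolding zpl_def zmi_def by (rule zm_mi_pl)
lemma zpl_zmi: "a < m \<Longrightarrow> x < m \<Longrightarrow> zpl m a (zmi m x a) = x"
  unfolding zpl_def zmi_def by (rule zm_pl_mi)
lemma zpl_0: "x < m \<Longrightarrow> zpl m x 0 = x" unfolding zpl_def by simp


definition addc :: "int \<times> int \<Rightarrow> int \<times> int \<Rightarrow> int \<times> int" where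
  "addc u c = ((fst u + fst c) mod 4, (snd u + snd c) mod 4)"

lemma adj_sym: "shrikhande_adj u v \<Longrightarrow> shrikhande_adj v u"
proof -
  assume a: "shrikhande_adj u v"
  define x where "x = (fst v - fst u) mod 4"
  define y where "y = (snd v - snd u) mod 4"
  have xy: "(x, y) \<in> shrikhande_conn" using a unfolding shrikhande_adj_def x_def y_def by simp
  have "(fst u - fst v) mod 4 = (- x) mod 4" unfolding x_def by (simp add: mod_minus_eq)
  moreover have "(snd u - snd v) mod 4 = (- y) mod 4" unfolding y_def by (simp add: mod_minus_eq)
  moreover have "((- x) mod 4, (- y) mod 4) \<in> shrikhande_conn"
    using xy unfolding shrikhande_conn_def by auto
  ultimately show ?thesis unfolding shrikhande_adj_def by simp
qed

lemma adj_irrefl: "\<not> shrikhande_adj u u"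
  unfolding shrikhande_adj_def shrikhande_conn_def by auto

lemma adj_addc:
  assumes "u \<in> shrikhande_vertices" "c \<in> shrikhande_conn"
  shows "addc u c \<in> shrikhande_vertices \<and> shrikhande_adj u (addc u c)"
proof -
  obtain u1 u2 where u: "u = (u1,u2)" by force
  obtain c1 c2 where c: "c = (c1,c2)" by force
  have "c1 \<in> {0..3} \<and> c2 \<in> {0..3}" using assms(2) c unfolding shrikhande_conn_def by auto
  moreover have "((u1 + c1) mod 4 - u1) mod 4 = c1 mod 4"
    by (metis add_diff_cancel_left' mod_diff_left_eq)
  moreover have "((u2 + c2) mod 4 - u2) mod 4 = c2 mod 4"
    by (metis add_diff_cancel_left' mod_diff_left_eq)
  ultimately show ?thesis using assms(2) unfolding u c addc_def shrikhande_adj_def shrikhande_vertices_def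
    by auto
qed

lemma adj_is_addc:
  assumes "u \<in> shrikhande_vertices" "v \<in> shrikhande_vertices" "shrikhande_adj u v"
  shows "\<exists>c\<in>shrikhande_conn. v = addc u c"
proof -
  obtain u1 u2 where u: "u = (u1,u2)" by force
  obtain v1 v2 where v: "v = (v1,v2)" by force
  have r: "v1 \<in> {0..3}" "v2 \<in> {0..3}" using assms(2) v unfolding shrikhande_vertices_def by auto
  have "(u1 + (v1 - u1) mod 4) mod 4 = v1"
    using r by (simp add: mod_add_right_eq)
  moreover have "(u2 + (v2 - u2) mod 4) mod 4 = v2"
    using r by (simp add: mod_add_right_eq)
  ultimately show ?thesis using assms(3) unfolding u v addc_def shrikhande_adj_def
    by (intro bexI[of _ "((v1 - u1) mod 4, (v2 - u2) mod 4)"]) auto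
qed

lemma card_V: "card shrikhande_vertices = 16"
  unfolding shrikhande_vertices_def by (simp add: card_cartesian_product)

lemma card_conn: "card shrikhande_conn = 6"
  unfolding shrikhande_conn_def by simp

lemma finite_V: "finite shrikhande_vertices"
  unfolding shrikhande_vertices_def by simp

lemma design_from_DF:
  fixes pl mi :: "nat \<Rightarrow> nat \<Rightarrow> nat" and F :: "nat \<Rightarrow> int \<times> int \<Rightarrow> nat" and k n :: nat
  assumes pl_in: "\<And>x t. x < n \<Longrightarrow> t < n \<Longrightarrow> pl x t < n"
  and mi_in: "\<And>x y. x < n \<Longrightarrow> y < n \<Longrightarrow> mi y x < n"
  and pl_cancel1: "\<And>a t s. a < n \<Longrightarrow> t < n \<Longrightarrow> s < n \<Longrightarrow> pl a t = pl a s \<Longrightarrow> t = s"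
  and pl_cancel2: "\<And>a b t. a < n \<Longrightarrow> b < n \<Longrightarrow> t < n \<Longrightarrow> pl a t = pl b t \<Longrightarrow> a = b"
  and mi_pl: "\<And>a b t. a < n \<Longrightarrow> b < n \<Longrightarrow> t < n \<Longrightarrow> mi (pl b t) (pl a t) = mi b a"
  and pl_mi: "\<And>a x. a < n \<Longrightarrow> x < n \<Longrightarrow> pl a (mi x a) = x"
  and pl_0: "\<And>x. x < n \<Longrightarrow> pl x 0 = x"
  and F_in: "\<And>i v. i < k \<Longrightarrow> v \<in> shrikhande_vertices \<Longrightarrow> F i v < n"
  and F_inj: "\<And>i. i < k \<Longrightarrow> inj_on (F i) shrikhande_vertices"
  and surj: "\<And>d. 0 < d \<Longrightarrow> d < n \<Longrightarrow> \<exists>i u c. i < k \<and> u \<in> shrikhande_vertices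
               \<and> c \<in> shrikhande_conn \<and> mi (F i (addc u c)) (F i u) = d"
  and nk: "n = 96 * k + 1"
  shows "\<exists>D. shrikhande_design n D \<and> finite D \<and> card D = n * (n - 1) div 96"
proof -
  let ?V = shrikhande_vertices
  define S where "S = {(i,u,v). i < k \<and> u \<in> ?V \<and> v \<in> ?V \<and> shrikhande_adj u v}"
  define \<delta> where "\<delta> = (\<lambda>(i,u,v). mi (F i v) (F i u))"
  have mi_0: "y = x" if "x < n" "y < n" "mi y x = 0" for x y
    using pl_mi[OF that(1,2)] pl_0[OF that(1)] that(3) by simp
  have S_sub: "S \<subseteq> (\<lambda>(i,u,c). (i,u,addc u c)) ` ({..<k} \<times> ?V \<times> shrikhande_conn)"
  proof
    fix x assume "x \<in> S"
    then obtain i u v where x: "x = (i,u,v)" "i < k" "u \<in> ?V" "v \<in> ?V" "shrikhande_adj u v"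
      unfolding S_def by auto
    then obtain c where "c \<in> shrikhande_conn" "v = addc u c" using adj_is_addc by blast
    then show "x \<in> (\<lambda>(i,u,c). (i,u,addc u c)) ` ({..<k} \<times> ?V \<times> shrikhande_conn)"
      using x by force
  qed
  have finS: "finite S"
    by (rule finite_subset[OF S_sub]) (simp add: finite_V shrikhande_conn_def)
  have "card S \<le> card ({..<k} \<times> ?V \<times> shrikhande_conn)"
    by (rule order.trans[OF card_mono[OF _ S_sub] card_image_le])
       (simp_all add: finite_V shrikhande_conn_def)
  hence cardS: "card S \<le> n - 1" using nk by (simp add: card_cartesian_product card_V card_conn)
  have img: "\<delta> ` S = {1..<n}"
  proof
    show "\<delta> ` S \<subseteq> {1..<n}"
    proof
      fix y assume "y \<in> \<delta> ` S"
      then obtain i u v where x: "y = \<delta> (i,u,v)" "i < k" "u \<in> ?V" "v \<in> ?V" "shrikhande_adj u v"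
        unfolding S_def by auto
      have "u \<noteq> v" using x(5) adj_irrefl by blast
      hence "F i u \<noteq> F i v" using F_inj[OF x(2)] x(3,4) by (auto dest: inj_onD)
      moreover have "F i u < n" "F i v < n" using F_in x by auto
      moreover have "y = mi (F i v) (F i u)" using x(1) unfolding \<delta>_def by simp
      ultimately have "y < n" "y \<noteq> 0"
        using mi_in[of "F i u" "F i v"] mi_0[of "F i u" "F i v"] by auto
      then show "y \<in> {1..<n}" by simp
    qed
  next
    show "{1..<n} \<subseteq> \<delta> ` S"
    proof
      fix d assume "d \<in> {1..<n}"
      hence "0 < d" "d < n" by auto
      then obtain i u c where x: "i < k" "u \<in> ?V" "c \<in> shrikhande_conn" "mi (F i (addc u c)) (F i u) = d"
        using surj[of d] by blast
      have "(i, u, addc u c) \<in> S" using adj_addc[OF x(2,3)] x(1,2) unfolding S_def by simp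
      moreover have "d = \<delta> (i, u, addc u c)" using x(4) unfolding \<delta>_def by simp
      ultimately show "d \<in> \<delta> ` S" by (rule rev_image_eqI)
    qed
  qed
  have inj\<delta>: "inj_on \<delta> S"
  proof (rule eq_card_imp_inj_on[OF finS])
    have "card (\<delta> ` S) = n - 1" using img by simp
    moreover have "card (\<delta> ` S) \<le> card S" by (rule card_image_le[OF finS])
    ultimately show "card (\<delta> ` S) = card S" using cardS by linarith
  qed
  define g where "g = (\<lambda>i t v. pl (F i v) t)"
  define H where "H = (\<lambda>i t. (\<lambda>e. g i t ` e) ` shrikhande_edges)"
  have ginj: "inj_on (g i t) ?V" if it: "i < k" "t < n" for i t
  proof (rule inj_onI)
    fix a b assume ab: "a \<in> ?V" "b \<in> ?V" "g i t a = g i t b"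
    have "F i a < n" "F i b < n" using F_in it ab by auto
    hence "F i a = F i b" using pl_cancel2 it ab(3) unfolding g_def by blast
    thus "a = b" using F_inj[OF it(1)] ab(1,2) by (auto dest: inj_onD)
  qed
  have copy: "shrikhande_copy n (H i t)" if it: "i < k" "t < n" for i t
    unfolding shrikhande_copy_def
  proof (intro exI[of _ "g i t"] conjI)
    show "inj_on (g i t) ?V" by (rule ginj[OF it])
    show "g i t ` ?V \<subseteq> {0..<n}" using pl_in F_in it unfolding g_def by auto
    show "H i t = (\<lambda>e. g i t ` e) ` shrikhande_edges" unfolding H_def ..
  qed
  have memH: "\<exists>u v. u \<in> ?V \<and> v \<in> ?V \<and> shrikhande_adj u v \<and> e = {pl (F i u) t, pl (F i v) t}"
    if "e \<in> H i t" for e i t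
    using that unfolding H_def shrikhande_edges_def g_def by blast
  have uniq: "i = j \<and> t = s" if a: "i < k" "t < n" "j < k" "s < n" "e \<in> H i t" "e \<in> H j s" for i t j s e
  proof -
    obtain u v where uv: "u \<in> ?V" "v \<in> ?V" "shrikhande_adj u v" "e = {pl (F i u) t, pl (F i v) t}"
      using memH[OF a(5)] by blast
    obtain u' v' where uv': "u' \<in> ?V" "v' \<in> ?V" "shrikhande_adj u' v'" "e = {pl (F j u') s, pl (F j v') s}"
      using memH[OF a(6)] by blast
    have lt: "F i u < n" "F i v < n" "F j u' < n" "F j v' < n" using F_in that uv uv' by auto
    have S1: "(i,u,v) \<in> S" "(j,u',v') \<in> S" "(j,v',u') \<in> S" using uv uv' that adj_sym unfolding S_def by auto
    from uv(4) uv'(4) have "(pl (F i u) t = pl (F j u') s \<and> pl (F i v) t = pl (F j v') s) \<or>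
       (pl (F i u) t = pl (F j v') s \<and> pl (F i v) t = pl (F j u') s)"
      by (simp add: doubleton_eq_iff) metis
    then show ?thesis
    proof
      assume h: "pl (F i u) t = pl (F j u') s \<and> pl (F i v) t = pl (F j v') s"
      have "\<delta> (i,u,v) = \<delta> (j,u',v')" unfolding \<delta>_def
        using mi_pl[of "F i u" "F i v" t] mi_pl[of "F j u'" "F j v'" s] h lt that by simp
      hence "(i,u,v) = (j,u',v')" using inj\<delta> S1 by (auto dest: inj_onD)
      thus ?thesis using h pl_cancel1 lt that by auto
    next
      assume h: "pl (F i u) t = pl (F j v') s \<and> pl (F i v) t = pl (F j u') s"
      have "\<delta> (i,u,v) = \<delta> (j,v',u')" unfolding \<delta>_def
        using mi_pl[of "F i u" "F i v" t] mi_pl[of "F j v'" "F j u'" s] h lt that by simp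
      hence "(i,u,v) = (j,v',u')" using inj\<delta> S1 by (auto dest: inj_onD)
      thus ?thesis using h pl_cancel1 lt that by auto
    qed
  qed
  have Hsub: "H i t \<subseteq> complete_edges n" if "i < k" "t < n" for i t
  proof
    fix e assume "e \<in> H i t"
    then obtain u v where uv: "u \<in> ?V" "v \<in> ?V" "shrikhande_adj u v" "e = {pl (F i u) t, pl (F i v) t}"
      using memH by blast
    have lt: "F i u < n" "F i v < n" using F_in that uv by auto
    have "u \<noteq> v" using uv(3) adj_irrefl by blast
    hence "F i u \<noteq> F i v" using F_inj[OF that(1)] uv by (auto dest: inj_onD)
    hence "pl (F i u) t \<noteq> pl (F i v) t" using pl_cancel2 lt that by blast
    thus "e \<in> complete_edges n" unfolding complete_edges_def using uv(4) pl_in lt that by auto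
  qed
  have cover: "\<exists>i<k. \<exists>t<n. e \<in> H i t" if a: "e \<in> complete_edges n" for e
  proof -
    obtain x y where e: "e = {x,y}" "x \<noteq> y" using a unfolding complete_edges_def by (auto simp: card_2_iff)
    have xy: "x < n" "y < n" using that e unfolding complete_edges_def by auto
    have "mi y x \<noteq> 0" using mi_0 xy e by blast
    hence "mi y x \<in> \<delta> ` S" using img mi_in xy by auto
    then obtain i u v where iuv: "(i,u,v) \<in> S" "mi (F i v) (F i u) = mi y x" unfolding \<delta>_def by auto
    have iuv2: "i < k" "u \<in> ?V" "v \<in> ?V" "shrikhande_adj u v" using iuv(1) unfolding S_def by auto
    have lt: "F i u < n" "F i v < n" using F_in iuv2 by auto
    define t where "t = mi x (F i u)"
    have t: "t < n" unfolding t_def using mi_in lt xy by auto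
    have 1: "pl (F i u) t = x" unfolding t_def using pl_mi lt xy by auto
    have "mi (pl (F i v) t) x = mi y x" using mi_pl[OF lt(1) lt(2) t] 1 iuv(2) by simp
    hence 2: "pl (F i v) t = y" using pl_mi[OF xy(1), of "pl (F i v) t"] pl_mi[OF xy(1) xy(2)] pl_in[OF lt(2) t]
      by metis
    have "{u,v} \<in> shrikhande_edges" unfolding shrikhande_edges_def using iuv2 by blast
    moreover have "e = g i t ` {u,v}" unfolding g_def e using 1 2 by auto
    ultimately have "e \<in> H i t" unfolding H_def by (rule rev_image_eqI)
    thus ?thesis using iuv2 t by blast
  qed
  have Hne: "H i t \<noteq> {}" for i t
  proof -
    have "shrikhande_adj (0,0) (1,0)" by (simp add: shrikhande_adj_def shrikhande_conn_def)
    moreover have "(0,0) \<in> shrikhande_vertices" "(1,0) \<in> shrikhande_vertices"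
      by (simp_all add: shrikhande_vertices_def)
    ultimately have "{(0,0),(1,0)} \<in> shrikhande_edges" unfolding shrikhande_edges_def by blast
    thus ?thesis unfolding H_def by blast
  qed
  define D where "D = (\<lambda>(i,t). H i t) ` ({..<k} \<times> {..<n})"
  have injH: "inj_on (\<lambda>(i,t). H i t) ({..<k} \<times> {..<n})"
  proof (rule inj_onI, clarsimp)
    fix i t j s assume h: "i < k" "t < n" "j < k" "s < n" "H i t = H j s"
    obtain e where "e \<in> H i t" using Hne by blast
    thus "i = j \<and> t = s" using uniq h by metis
  qed
  have "shrikhande_design n D"
    unfolding shrikhande_design_def
  proof (intro conjI)
    show "\<forall>H\<in>D. shrikhande_copy n H" unfolding D_def using copy by auto
    show "\<forall>H1\<in>D. \<forall>H2\<in>D. H1 \<noteq> H2 \<longrightarrow> H1 \<inter> H2 = {}"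
    proof (intro ballI impI)
      fix H1 H2 assume h: "H1 \<in> D" "H2 \<in> D" "H1 \<noteq> H2"
      obtain i t where 1: "i < k" "t < n" "H1 = H i t" using h(1) unfolding D_def by auto
      obtain j s where 2: "j < k" "s < n" "H2 = H j s" using h(2) unfolding D_def by auto
      show "H1 \<inter> H2 = {}"
      proof (rule ccontr)
        assume "H1 \<inter> H2 \<noteq> {}"
        then obtain e where "e \<in> H i t" "e \<in> H j s" using 1 2 by blast
        hence "i = j \<and> t = s" using uniq 1 2 by blast
        thus False using h(3) 1 2 by simp
      qed
    qed
    show "\<Union> D = complete_edges n"
    proof
      show "\<Union> D \<subseteq> complete_edges n" unfolding D_def using Hsub by blast
      show "complete_edges n \<subseteq> \<Union> D"
      proof
        fix e assume "e \<in> complete_edges n"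
        then obtain i t where "i < k" "t < n" "e \<in> H i t" using cover by blast
        thus "e \<in> \<Union> D" unfolding D_def by blast
      qed
    qed
  qed
  moreover have "card D = n * (n - 1) div 96"
    unfolding D_def using card_image[OF injH] nk by (simp add: card_cartesian_product)
  moreover have "finite D" unfolding D_def by simp
  ultimately show ?thesis by blast
qed



definition Vlist :: "(int \<times> int) list" where
  "Vlist = List.product [0,1,2,3] [0,1,2,3]"
definition connlist :: "(int \<times> int) list" where
  "connlist = [(1,0), (3,0), (0,1), (0,3), (1,1), (3,3)]"

lemma set_Vlist: "set Vlist = shrikhande_vertices"
proof -
  have "{0..3::int} = {0,1,2,3}" by auto
  thus ?thesis unfolding Vlist_def shrikhande_vertices_def by simp
qed
lemma set_connlist: "set connlist = shrikhande_conn"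
  unfolding connlist_def shrikhande_conn_def by simp

definition lookupF :: "nat list list \<Rightarrow> nat \<Rightarrow> int \<times> int \<Rightarrow> nat" where
  "lookupF Fs i v = Fs ! i ! nat (4 * fst v + snd v)"

lemma design_from_lists:
  fixes pl mi :: "nat \<Rightarrow> nat \<Rightarrow> nat" and Fs :: "nat list list" and k n :: nat
    and W :: "(nat \<times> nat \<times> (int \<times> int) \<times> (int \<times> int)) list"
  assumes pl_in: "\<And>x t. x < n \<Longrightarrow> t < n \<Longrightarrow> pl x t < n"
  and mi_in: "\<And>x y. x < n \<Longrightarrow> y < n \<Longrightarrow> mi y x < n"
  and pl_cancel1: "\<And>a t s. a < n \<Longrightarrow> t < n \<Longrightarrow> s < n \<Longrightarrow> pl a t = pl a s \<Longrightarrow> t = s"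
  and pl_cancel2: "\<And>a b t. a < n \<Longrightarrow> b < n \<Longrightarrow> t < n \<Longrightarrow> pl a t = pl b t \<Longrightarrow> a = b"
  and mi_pl: "\<And>a b t. a < n \<Longrightarrow> b < n \<Longrightarrow> t < n \<Longrightarrow> mi (pl b t) (pl a t) = mi b a"
  and pl_mi: "\<And>a x. a < n \<Longrightarrow> x < n \<Longrightarrow> pl a (mi x a) = x"
  and pl_0: "\<And>x. x < n \<Longrightarrow> pl x 0 = x"
  and c1: "list_all (\<lambda>i. list_all (\<lambda>v. lookupF Fs i v < n) Vlist \<and> distinct (map (lookupF Fs i) Vlist)) [0..<k]"
  and c2: "map fst W = [1..<n]"
  and c3: "list_all (\<lambda>(d,i,u,c). i < k \<and> u \<in> set Vlist \<and> c \<in> set connlist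
              \<and> mi (lookupF Fs i (addc u c)) (lookupF Fs i u) = d) W"
  and nk: "n = 96 * k + 1"
  shows "\<exists>D. shrikhande_design n D \<and> finite D \<and> card D = n * (n - 1) div 96"
proof -
  have F_in: "lookupF Fs i v < n" if "i < k" "v \<in> shrikhande_vertices" for i v
  proof -
    have "list_all (\<lambda>v. lookupF Fs i v < n) Vlist" using c1 that(1) by (simp add: list_all_iff)
    thus ?thesis using that(2) set_Vlist by (simp add: list_all_iff)
  qed
  have F_inj: "inj_on (lookupF Fs i) shrikhande_vertices" if "i < k" for i
  proof -
    have "distinct (map (lookupF Fs i) Vlist)" using c1 that by (simp add: list_all_iff)
    thus ?thesis using set_Vlist by (simp add: distinct_map)
  qed
  have surj: "\<exists>i u c. i < k \<and> u \<in> shrikhande_vertices \<and> c \<in> shrikhande_conn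
          \<and> mi (lookupF Fs i (addc u c)) (lookupF Fs i u) = d" if "0 < d" "d < n" for d
  proof -
    have "d \<in> set (map fst W)" using c2 that by simp
    then obtain w where w: "w \<in> set W" "fst w = d" by auto
    obtain d' i u c where wd: "w = (d', i, u, c)" by (cases w) auto
    have "(\<lambda>(d,i,u,c). i < k \<and> u \<in> set Vlist \<and> c \<in> set connlist
              \<and> mi (lookupF Fs i (addc u c)) (lookupF Fs i u) = d) w"
      using c3 w(1) unfolding list_all_iff by blast
    hence "i < k \<and> u \<in> shrikhande_vertices \<and> c \<in> shrikhande_conn
              \<and> mi (lookupF Fs i (addc u c)) (lookupF Fs i u) = d"
      using wd w(2) set_Vlist set_connlist by simp
    thus ?thesis by blast
  qed
  show ?thesis
    by (rule design_from_DF[where pl = pl and mi = mi and F = "lookupF Fs" and k = k and n = n,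
          OF pl_in mi_in pl_cancel1 pl_cancel2 mi_pl pl_mi pl_0 F_in F_inj surj nk])

qed

definition Fs97 :: "nat list list" where
  "Fs97 = [[0, 62, 20, 43, 96, 50, 34, 37, 56, 19, 21, 26, 4, 83, 92, 36]]"

definition W97_0 :: "(nat \<times> nat \<times> (int \<times> int) \<times> (int \<times> int)) list" where
  "W97_0 = [(1, 0, (1, 0), (3, 0)), (2, 0, (2, 1), (0, 1)), (3, 0, (1, 2), (0, 1)), (4, 0, (0, 0), (3, 0)), (5, 0, (2, 2), (0, 1)), (6, 0, (1, 3), (3, 0)), (7, 0, (3, 3), (1, 0)), (8, 0, (2, 3), (3, 3)), (9, 0, (3, 1), (0, 1)), (10, 0, (2, 3), (1, 0)), (11, 0, (2, 3), (3, 0)), (12, 0, (1, 1), (3, 0)), (13, 0, (2, 2), (3, 0)), (14, 0, (0, 2), (1, 0)), (15, 0, (2, 2), (1, 1)), (16, 0, (1, 2), (0, 3)), (17, 0, (0, 2), (1, 1)), (18, 0, (3, 1), (0, 3)), (19, 0, (1, 3), (1, 1)), (20, 0, (1, 0), (1, 1)), (21, 0, (0, 1), (3, 0)), (22, 0, (3, 0), (3, 3)), (23, 0, (0, 2), (0, 1)), (24, 0, (3, 2), (3, 3))]"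

definition W97_1 :: "(nat \<times> nat \<times> (int \<times> int) \<times> (int \<times> int)) list" where
  "W97_1 = [(25, 0, (3, 2), (1, 0)), (26, 0, (3, 2), (3, 0)), (27, 0, (2, 0), (1, 1)), (28, 0, (1, 2), (3, 3)), (29, 0, (2, 2), (3, 3)), (30, 0, (2, 3), (0, 1)), (31, 0, (2, 1), (3, 0)), (32, 0, (3, 0), (0, 3)), (33, 0, (3, 1), (3, 0)), (34, 0, (3, 1), (1, 1)), (35, 0, (0, 1), (0, 3)), (36, 0, (0, 0), (3, 3)), (37, 0, (2, 1), (0, 3)), (38, 0, (1, 0), (0, 3)), (39, 0, (0, 1), (3, 3)), (40, 0, (2, 0), (3, 0)), (41, 0, (3, 2), (0, 1)), (42, 0, (0, 2), (0, 3)), (43, 0, (0, 0), (0, 3)), (44, 0, (1, 0), (3, 3)), (45, 0, (2, 0), (1, 0)), (46, 0, (1, 1), (0, 3)), (47, 0, (1, 1), (3, 3)), (48, 0, (3, 2), (1, 1))]"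

definition W97_2 :: "(nat \<times> nat \<times> (int \<times> int) \<times> (int \<times> int)) list" where
  "W97_2 = [(49, 0, (0, 3), (3, 3)), (50, 0, (0, 0), (1, 1)), (51, 0, (1, 0), (0, 1)), (52, 0, (3, 0), (3, 0)), (53, 0, (0, 3), (1, 1)), (54, 0, (0, 3), (0, 1)), (55, 0, (0, 1), (0, 1)), (56, 0, (3, 3), (0, 3)), (57, 0, (1, 0), (1, 0)), (58, 0, (3, 0), (1, 1)), (59, 0, (1, 3), (0, 1)), (60, 0, (2, 0), (0, 1)), (61, 0, (3, 3), (1, 1)), (62, 0, (0, 0), (0, 1)), (63, 0, (0, 2), (3, 3)), (64, 0, (2, 1), (1, 0)), (65, 0, (3, 3), (0, 1)), (66, 0, (1, 1), (1, 0)), (67, 0, (2, 0), (0, 3)), (68, 0, (1, 1), (1, 1)), (69, 0, (0, 1), (1, 1)), (70, 0, (3, 1), (3, 3)), (71, 0, (2, 2), (1, 0)), (72, 0, (0, 2), (3, 0))]"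

definition W97_3 :: "(nat \<times> nat \<times> (int \<times> int) \<times> (int \<times> int)) list" where
  "W97_3 = [(73, 0, (2, 1), (1, 1)), (74, 0, (0, 3), (0, 3)), (75, 0, (2, 3), (1, 1)), (76, 0, (3, 1), (1, 0)), (77, 0, (2, 1), (3, 3)), (78, 0, (2, 0), (3, 3)), (79, 0, (3, 0), (0, 1)), (80, 0, (1, 3), (3, 3)), (81, 0, (1, 1), (0, 1)), (82, 0, (3, 3), (3, 3)), (83, 0, (1, 2), (3, 0)), (84, 0, (1, 2), (1, 0)), (85, 0, (0, 1), (1, 0)), (86, 0, (1, 3), (1, 0)), (87, 0, (3, 3), (3, 0)), (88, 0, (3, 2), (0, 3)), (89, 0, (1, 2), (1, 1)), (90, 0, (0, 3), (3, 0)), (91, 0, (0, 3), (1, 0)), (92, 0, (2, 3), (0, 3)), (93, 0, (3, 0), (1, 0)), (94, 0, (1, 3), (0, 3)), (95, 0, (2, 2), (0, 3)), (96, 0, (0, 0), (1, 0))]"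

definition W97 :: "(nat \<times> nat \<times> (int \<times> int) \<times> (int \<times> int)) list" where
  "W97 = W97_0 @ W97_1 @ W97_2 @ W97_3"

definition chk97 :: "nat \<times> nat \<times> (int \<times> int) \<times> (int \<times> int) \<Rightarrow> bool" where
  "chk97 = (\<lambda>(d,i,u,c). i < 1 \<and> u \<in> set Vlist \<and> c \<in> set connlist \<and> zmi 97 (lookupF Fs97 i (addc u c)) (lookupF Fs97 i u) = d)"

lemma W97_0_ok: "list_all chk97 W97_0" unfolding chk97_def by code_simp

lemma W97_1_ok: "list_all chk97 W97_1" unfolding chk97_def by code_simp

lemma W97_2_ok: "list_all chk97 W97_2" unfolding chk97_def by code_simp

lemma W97_3_ok: "list_all chk97 W97_3" unfolding chk97_def by code_simp

lemma W97_ok: "list_all chk97 W97"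
  unfolding W97_def list_all_append using W97_0_ok W97_1_ok W97_2_ok W97_3_ok by blast

lemma n97: "\<exists>D. shrikhande_design 97 D \<and> finite D \<and> card D = 97 * (97 - 1) div 96"
proof (rule design_from_lists[where pl = "zpl 97" and mi = "zmi 97" and k = 1 and Fs = Fs97 and W = W97])
  show "\<And>x t. x < 97 \<Longrightarrow> t < 97 \<Longrightarrow> zpl 97 x t < 97" by (rule zpl_in)
  show "\<And>x y. x < 97 \<Longrightarrow> y < 97 \<Longrightarrow> zmi 97 y x < 97" by (rule zmi_in)
  show "\<And>a t s. a < 97 \<Longrightarrow> t < 97 \<Longrightarrow> s < 97 \<Longrightarrow> zpl 97 a t = zpl 97 a s \<Longrightarrow> t = s" by (rule zpl_cancel1)
  show "\<And>a b t. a < 97 \<Longrightarrow> b < 97 \<Longrightarrow> t < 97 \<Longrightarrow> zpl 97 a t = zpl 97 b t \<Longrightarrow> a = b" by (rule zpl_cancel2)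
  show "\<And>a b t. a < 97 \<Longrightarrow> b < 97 \<Longrightarrow> t < 97 \<Longrightarrow> zmi 97 (zpl 97 b t) (zpl 97 a t) = zmi 97 b a" by (rule zmi_zpl)
  show "\<And>a x. a < 97 \<Longrightarrow> x < 97 \<Longrightarrow> zpl 97 a (zmi 97 x a) = x" by (rule zpl_zmi)
  show "\<And>x. x < 97 \<Longrightarrow> zpl 97 x 0 = x" by (rule zpl_0)
  show "97 = 96 * 1 + (1::nat)" by simp
  show "list_all (\<lambda>i. list_all (\<lambda>v. lookupF Fs97 i v < 97) Vlist \<and> distinct (map (lookupF Fs97 i) Vlist)) [0..<1]"
    by code_simp
  show "map fst W97 = [1..<97]" by code_simp
  show "list_all (\<lambda>(d,i,u,c). i < 1 \<and> u \<in> set Vlist \<and> c \<in> set connlist \<and> zmi 97 (lookupF Fs97 i (addc u c)) (lookupF Fs97 i u) = d) W97"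
    using W97_ok unfolding chk97_def .
qed

definition Fs193 :: "nat list list" where
  "Fs193 = [[0, 112, 143, 133, 130, 171, 7, 177, 4, 145, 46, 9, 82, 21, 27, 144], [0, 90, 50, 54, 70, 97, 133, 82, 189, 62, 147, 171, 42, 190, 134, 33]]"

definition W193_0 :: "(nat \<times> nat \<times> (int \<times> int) \<times> (int \<times> int)) list" where
  "W193_0 = [(1, 1, (2, 0), (1, 1)), (2, 0, (1, 2), (1, 1)), (3, 0, (1, 0), (3, 3)), (4, 1, (0, 2), (0, 1)), (5, 0, (2, 0), (0, 3)), (6, 0, (3, 1), (0, 1)), (7, 1, (0, 1), (1, 0)), (8, 1, (2, 1), (3, 3)), (9, 1, (3, 3), (0, 1)), (10, 0, (0, 3), (0, 3)), (11, 0, (0, 3), (3, 0)), (12, 1, (1, 0), (0, 3)), (13, 1, (3, 2), (3, 0)), (14, 1, (1, 2), (1, 0)), (15, 0, (1, 0), (1, 1)), (16, 1, (0, 3), (1, 1)), (17, 0, (2, 0), (1, 1)), (18, 1, (2, 3), (0, 1)), (19, 0, (3, 2), (3, 0)), (20, 0, (1, 3), (1, 1)), (21, 1, (3, 3), (1, 0)), (22, 0, (1, 1), (3, 3)), (23, 0, (1, 3), (0, 3)), (24, 1, (2, 2), (0, 1))]"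

definition W193_1 :: "(nat \<times> nat \<times> (int \<times> int) \<times> (int \<times> int)) list" where
  "W193_1 = [(25, 0, (1, 3), (1, 0)), (26, 0, (2, 1), (3, 0)), (27, 1, (1, 0), (0, 1)), (28, 1, (0, 3), (1, 0)), (29, 0, (1, 1), (0, 1)), (30, 0, (3, 0), (1, 1)), (31, 0, (0, 1), (0, 1)), (32, 1, (0, 2), (1, 1)), (33, 1, (0, 0), (3, 3)), (34, 0, (0, 2), (1, 1)), (35, 1, (2, 1), (3, 0)), (36, 1, (1, 1), (0, 1)), (37, 0, (2, 3), (0, 3)), (38, 1, (1, 2), (1, 1)), (39, 0, (1, 2), (1, 0)), (40, 1, (0, 2), (0, 3)), (41, 0, (1, 0), (0, 1)), (42, 1, (0, 0), (3, 0)), (43, 1, (0, 1), (1, 1)), (44, 0, (0, 3), (1, 0)), (45, 1, (3, 1), (0, 3)), (46, 1, (2, 0), (1, 0)), (47, 0, (1, 0), (0, 3)), (48, 1, (3, 0), (1, 1))]"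

definition W193_2 :: "(nat \<times> nat \<times> (int \<times> int) \<times> (int \<times> int)) list" where
  "W193_2 = [(49, 0, (3, 3), (1, 1)), (50, 1, (1, 1), (1, 1)), (51, 1, (1, 3), (0, 3)), (52, 0, (2, 1), (0, 3)), (53, 1, (3, 1), (1, 1)), (54, 1, (0, 0), (0, 3)), (55, 1, (2, 3), (1, 0)), (56, 1, (3, 2), (0, 3)), (57, 0, (0, 2), (1, 0)), (58, 0, (3, 3), (3, 0)), (59, 0, (0, 1), (1, 0)), (60, 0, (0, 3), (0, 1)), (61, 0, (3, 1), (0, 3)), (62, 0, (3, 0), (0, 3)), (63, 0, (1, 0), (3, 0)), (64, 1, (2, 3), (1, 1)), (65, 1, (3, 1), (3, 0)), (66, 1, (2, 0), (0, 1)), (67, 0, (1, 0), (1, 0)), (68, 0, (1, 1), (1, 1)), (69, 0, (2, 1), (1, 0)), (70, 1, (0, 0), (1, 0)), (71, 0, (0, 2), (3, 3)), (72, 1, (2, 1), (1, 1))]"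

definition W193_3 :: "(nat \<times> nat \<times> (int \<times> int) \<times> (int \<times> int)) list" where
  "W193_3 = [(73, 0, (2, 3), (1, 1)), (74, 1, (2, 0), (3, 0)), (75, 0, (2, 1), (1, 1)), (76, 0, (3, 3), (0, 3)), (77, 0, (0, 2), (3, 0)), (78, 0, (2, 0), (1, 0)), (79, 1, (2, 2), (1, 1)), (80, 1, (0, 3), (3, 3)), (81, 0, (0, 1), (0, 3)), (82, 0, (0, 0), (3, 0)), (83, 1, (0, 2), (1, 0)), (84, 1, (0, 2), (3, 0)), (85, 1, (2, 1), (0, 1)), (86, 1, (2, 0), (3, 3)), (87, 0, (0, 3), (3, 3)), (88, 0, (0, 1), (1, 1)), (89, 1, (1, 3), (1, 0)), (90, 1, (0, 0), (0, 1)), (91, 0, (3, 1), (1, 0)), (92, 1, (3, 2), (0, 1)), (93, 1, (3, 1), (1, 0)), (94, 0, (2, 1), (0, 1)), (95, 0, (3, 3), (3, 3)), (96, 1, (1, 1), (3, 3))]"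

definition W193_4 :: "(nat \<times> nat \<times> (int \<times> int) \<times> (int \<times> int)) list" where
  "W193_4 = [(97, 1, (0, 0), (1, 1)), (98, 0, (2, 2), (1, 1)), (99, 0, (2, 2), (0, 3)), (100, 1, (0, 1), (3, 0)), (101, 1, (3, 3), (0, 3)), (102, 0, (0, 1), (3, 0)), (103, 1, (0, 1), (0, 3)), (104, 1, (2, 3), (3, 0)), (105, 0, (1, 2), (3, 3)), (106, 0, (3, 2), (1, 1)), (107, 1, (1, 3), (1, 1)), (108, 1, (2, 2), (0, 3)), (109, 1, (3, 2), (1, 0)), (110, 1, (1, 2), (3, 0)), (111, 0, (3, 0), (1, 0)), (112, 0, (0, 0), (0, 1)), (113, 1, (3, 2), (1, 1)), (114, 1, (3, 3), (3, 3)), (115, 0, (3, 0), (3, 0)), (116, 0, (3, 2), (1, 0)), (117, 0, (3, 2), (0, 1)), (118, 0, (3, 2), (3, 3)), (119, 1, (1, 0), (1, 0)), (120, 0, (3, 0), (3, 3))]"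

definition W193_5 :: "(nat \<times> nat \<times> (int \<times> int) \<times> (int \<times> int)) list" where
  "W193_5 = [(121, 1, (3, 2), (3, 3)), (122, 0, (3, 1), (1, 1)), (123, 1, (1, 0), (3, 0)), (124, 0, (3, 1), (3, 0)), (125, 0, (2, 2), (3, 3)), (126, 0, (2, 0), (3, 0)), (127, 1, (2, 1), (0, 3)), (128, 1, (2, 1), (1, 0)), (129, 1, (3, 0), (3, 3)), (130, 0, (0, 0), (1, 0)), (131, 0, (3, 3), (0, 1)), (132, 0, (3, 0), (0, 1)), (133, 0, (0, 0), (0, 3)), (134, 0, (1, 1), (3, 0)), (135, 0, (2, 3), (1, 0)), (136, 0, (1, 2), (3, 0)), (137, 1, (3, 1), (0, 1)), (138, 1, (3, 3), (3, 0)), (139, 1, (0, 3), (0, 1)), (140, 1, (0, 2), (3, 3)), (141, 0, (2, 0), (0, 1)), (142, 1, (1, 2), (0, 1)), (143, 1, (2, 2), (3, 3)), (144, 0, (0, 0), (3, 3))]"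

definition W193_6 :: "(nat \<times> nat \<times> (int \<times> int) \<times> (int \<times> int)) list" where
  "W193_6 = [(145, 1, (0, 1), (3, 3)), (146, 0, (1, 3), (0, 1)), (147, 1, (3, 0), (3, 0)), (148, 1, (3, 0), (0, 1)), (149, 0, (1, 3), (3, 0)), (150, 1, (1, 2), (3, 3)), (151, 1, (3, 0), (1, 0)), (152, 0, (1, 1), (0, 3)), (153, 1, (0, 1), (0, 1)), (154, 0, (2, 2), (3, 0)), (155, 1, (2, 3), (3, 3)), (156, 0, (2, 2), (0, 1)), (157, 1, (1, 2), (0, 3)), (158, 1, (1, 1), (1, 0)), (159, 0, (1, 3), (3, 3)), (160, 1, (3, 3), (1, 1)), (161, 1, (1, 3), (3, 3)), (162, 0, (0, 2), (0, 3)), (163, 0, (0, 1), (3, 3)), (164, 0, (1, 2), (0, 3)), (165, 1, (1, 3), (3, 0)), (166, 1, (1, 1), (0, 3)), (167, 0, (1, 1), (1, 0)), (168, 0, (2, 3), (3, 0))]"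

definition W193_7 :: "(nat \<times> nat \<times> (int \<times> int) \<times> (int \<times> int)) list" where
  "W193_7 = [(169, 1, (2, 3), (0, 3)), (170, 0, (1, 2), (0, 1)), (171, 0, (0, 0), (1, 1)), (172, 1, (0, 3), (3, 0)), (173, 0, (2, 0), (3, 3)), (174, 0, (2, 2), (1, 0)), (175, 1, (2, 0), (0, 3)), (176, 0, (3, 1), (3, 3)), (177, 1, (1, 0), (3, 3)), (178, 0, (2, 1), (3, 3)), (179, 1, (2, 2), (3, 0)), (180, 1, (2, 2), (1, 0)), (181, 1, (1, 3), (0, 1)), (182, 0, (3, 3), (1, 0)), (183, 0, (0, 2), (0, 1)), (184, 1, (3, 0), (0, 3)), (185, 1, (1, 0), (1, 1)), (186, 1, (1, 1), (3, 0)), (187, 0, (3, 2), (0, 3)), (188, 0, (2, 3), (0, 1)), (189, 1, (0, 3), (0, 3)), (190, 0, (0, 3), (1, 1)), (191, 0, (2, 3), (3, 3)), (192, 1, (3, 1), (3, 3))]"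

definition W193 :: "(nat \<times> nat \<times> (int \<times> int) \<times> (int \<times> int)) list" where
  "W193 = W193_0 @ W193_1 @ W193_2 @ W193_3 @ W193_4 @ W193_5 @ W193_6 @ W193_7"

definition chk193 :: "nat \<times> nat \<times> (int \<times> int) \<times> (int \<times> int) \<Rightarrow> bool" where
  "chk193 = (\<lambda>(d,i,u,c). i < 2 \<and> u \<in> set Vlist \<and> c \<in> set connlist \<and> zmi 193 (lookupF Fs193 i (addc u c)) (lookupF Fs193 i u) = d)"

lemma W193_0_ok: "list_all chk193 W193_0" unfolding chk193_def by code_simp

lemma W193_1_ok: "list_all chk193 W193_1" unfolding chk193_def by code_simp

lemma W193_2_ok: "list_all chk193 W193_2" unfolding chk193_def by code_simp

lemma W193_3_ok: "list_all chk193 W193_3" unfolding chk193_def by code_simp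

lemma W193_4_ok: "list_all chk193 W193_4" unfolding chk193_def by code_simp

lemma W193_5_ok: "list_all chk193 W193_5" unfolding chk193_def by code_simp

lemma W193_6_ok: "list_all chk193 W193_6" unfolding chk193_def by code_simp

lemma W193_7_ok: "list_all chk193 W193_7" unfolding chk193_def by code_simp

lemma W193_ok: "list_all chk193 W193"
  unfolding W193_def list_all_append using W193_0_ok W193_1_ok W193_2_ok W193_3_ok W193_4_ok W193_5_ok W193_6_ok W193_7_ok by blast

lemma n193: "\<exists>D. shrikhande_design 193 D \<and> finite D \<and> card D = 193 * (193 - 1) div 96"
proof (rule design_from_lists[where pl = "zpl 193" and mi = "zmi 193" and k = 2 and Fs = Fs193 and W = W193])
  show "\<And>x t. x < 193 \<Longrightarrow> t < 193 \<Longrightarrow> zpl 193 x t < 193" by (rule zpl_in)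
  show "\<And>x y. x < 193 \<Longrightarrow> y < 193 \<Longrightarrow> zmi 193 y x < 193" by (rule zmi_in)
  show "\<And>a t s. a < 193 \<Longrightarrow> t < 193 \<Longrightarrow> s < 193 \<Longrightarrow> zpl 193 a t = zpl 193 a s \<Longrightarrow> t = s" by (rule zpl_cancel1)
  show "\<And>a b t. a < 193 \<Longrightarrow> b < 193 \<Longrightarrow> t < 193 \<Longrightarrow> zpl 193 a t = zpl 193 b t \<Longrightarrow> a = b" by (rule zpl_cancel2)
  show "\<And>a b t. a < 193 \<Longrightarrow> b < 193 \<Longrightarrow> t < 193 \<Longrightarrow> zmi 193 (zpl 193 b t) (zpl 193 a t) = zmi 193 b a" by (rule zmi_zpl)
  show "\<And>a x. a < 193 \<Longrightarrow> x < 193 \<Longrightarrow> zpl 193 a (zmi 193 x a) = x" by (rule zpl_zmi)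
  show "\<And>x. x < 193 \<Longrightarrow> zpl 193 x 0 = x" by (rule zpl_0)
  show "193 = 96 * 2 + (1::nat)" by simp
  show "list_all (\<lambda>i. list_all (\<lambda>v. lookupF Fs193 i v < 193) Vlist \<and> distinct (map (lookupF Fs193 i) Vlist)) [0..<2]"
    by code_simp
  show "map fst W193 = [1..<193]" by code_simp
  show "list_all (\<lambda>(d,i,u,c). i < 2 \<and> u \<in> set Vlist \<and> c \<in> set connlist \<and> zmi 193 (lookupF Fs193 i (addc u c)) (lookupF Fs193 i u) = d) W193"
    using W193_ok unfolding chk193_def .
qed

definition Fs289 :: "nat list list" where
  "Fs289 = [[0, 246, 179, 172, 223, 121, 27, 282, 154, 143, 262, 14, 13, 72, 91, 126], [0, 108, 152, 190, 206, 80, 48, 6, 44, 130, 127, 269, 36, 51, 125, 281], [0, 200, 209, 151, 184, 17, 161, 131, 271, 126, 132, 31, 138, 223, 246, 228]]"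

definition W289_0 :: "(nat \<times> nat \<times> (int \<times> int) \<times> (int \<times> int)) list" where
  "W289_0 = [(1, 0, (3, 0), (3, 3)), (2, 1, (3, 2), (3, 0)), (3, 1, (2, 2), (0, 3)), (4, 0, (3, 0), (1, 0)), (5, 1, (3, 2), (3, 3)), (6, 2, (2, 1), (0, 1)), (7, 0, (0, 3), (0, 3)), (8, 1, (3, 0), (3, 0)), (9, 1, (2, 0), (1, 0)), (10, 0, (0, 2), (0, 1)), (11, 2, (2, 2), (0, 3)), (12, 1, (2, 1), (1, 1)), (13, 0, (0, 0), (3, 0)), (14, 1, (2, 1), (0, 1)), (15, 1, (2, 2), (1, 0)), (16, 0, (2, 3), (1, 1)), (17, 2, (0, 0), (1, 1)), (18, 2, (3, 3), (0, 3)), (19, 0, (3, 1), (0, 1)), (20, 2, (1, 3), (3, 0)), (21, 0, (1, 3), (1, 0)), (22, 0, (1, 1), (1, 0)), (23, 2, (3, 1), (0, 1)), (24, 1, (2, 0), (1, 1))]"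

definition W289_1 :: "(nat \<times> nat \<times> (int \<times> int) \<times> (int \<times> int)) list" where
  "W289_1 = [(25, 1, (3, 3), (1, 1)), (26, 2, (0, 1), (0, 1)), (27, 1, (3, 2), (1, 0)), (28, 0, (2, 1), (0, 3)), (29, 1, (2, 3), (1, 0)), (30, 0, (2, 3), (3, 3)), (31, 2, (0, 2), (3, 3)), (32, 1, (3, 0), (0, 1)), (33, 1, (0, 3), (1, 1)), (34, 0, (1, 3), (0, 3)), (35, 0, (3, 2), (0, 1)), (36, 1, (0, 0), (3, 0)), (37, 2, (0, 2), (3, 0)), (38, 1, (1, 3), (1, 1)), (39, 2, (1, 2), (3, 3)), (40, 2, (0, 1), (3, 0)), (41, 0, (2, 2), (0, 1)), (42, 1, (1, 3), (0, 3)), (43, 1, (2, 3), (3, 0)), (44, 1, (0, 1), (0, 1)), (45, 1, (1, 1), (3, 0)), (46, 2, (2, 2), (3, 0)), (47, 2, (1, 3), (0, 3)), (48, 2, (3, 1), (3, 3))]"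

definition W289_2 :: "(nat \<times> nat \<times> (int \<times> int) \<times> (int \<times> int)) list" where
  "W289_2 = [(49, 1, (1, 2), (0, 3)), (50, 2, (0, 3), (1, 1)), (51, 0, (0, 3), (1, 1)), (52, 0, (3, 2), (3, 3)), (53, 2, (1, 3), (0, 1)), (54, 0, (2, 2), (3, 0)), (55, 1, (0, 2), (0, 1)), (56, 0, (0, 1), (3, 3)), (57, 1, (3, 1), (1, 0)), (58, 2, (2, 1), (3, 3)), (59, 0, (1, 0), (0, 3)), (60, 0, (0, 1), (0, 3)), (61, 1, (3, 3), (0, 1)), (62, 2, (3, 0), (1, 1)), (63, 0, (3, 3), (1, 0)), (64, 1, (1, 1), (1, 1)), (65, 2, (1, 2), (3, 0)), (66, 2, (2, 0), (0, 3)), (67, 1, (1, 1), (1, 0)), (68, 1, (2, 3), (3, 3)), (69, 0, (2, 0), (3, 0)), (70, 0, (0, 1), (1, 1)), (71, 0, (3, 1), (3, 0)), (72, 1, (3, 0), (1, 1))]"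

definition W289_3 :: "(nat \<times> nat \<times> (int \<times> int) \<times> (int \<times> int)) list" where
  "W289_3 = [(73, 1, (2, 3), (1, 1)), (74, 1, (3, 1), (0, 1)), (75, 2, (0, 3), (0, 3)), (76, 0, (3, 0), (0, 1)), (77, 1, (1, 2), (3, 3)), (78, 2, (3, 3), (1, 1)), (79, 1, (3, 1), (3, 0)), (80, 1, (0, 0), (1, 1)), (81, 1, (2, 3), (0, 1)), (82, 1, (3, 2), (1, 1)), (83, 0, (1, 0), (3, 0)), (84, 0, (0, 2), (0, 3)), (85, 2, (3, 0), (0, 1)), (86, 1, (2, 0), (0, 1)), (87, 2, (1, 0), (1, 0)), (88, 0, (3, 2), (1, 0)), (89, 1, (1, 0), (0, 3)), (90, 2, (3, 0), (0, 3)), (91, 1, (0, 3), (3, 0)), (92, 2, (3, 3), (3, 0)), (93, 1, (2, 1), (3, 3)), (94, 2, (0, 3), (3, 0)), (95, 2, (1, 3), (3, 3)), (96, 1, (1, 2), (1, 0))]"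

definition W289_4 :: "(nat \<times> nat \<times> (int \<times> int) \<times> (int \<times> int)) list" where
  "W289_4 = [(97, 0, (2, 1), (3, 3)), (98, 0, (3, 2), (1, 1)), (99, 0, (3, 1), (3, 3)), (100, 1, (1, 0), (3, 0)), (101, 1, (3, 1), (1, 1)), (102, 0, (1, 1), (0, 3)), (103, 0, (0, 2), (1, 1)), (104, 1, (1, 2), (3, 0)), (105, 1, (0, 3), (1, 0)), (106, 2, (0, 1), (0, 3)), (107, 0, (3, 1), (1, 1)), (108, 1, (0, 0), (0, 1)), (109, 2, (1, 1), (1, 0)), (110, 0, (0, 3), (1, 0)), (111, 0, (1, 2), (0, 3)), (112, 2, (0, 3), (3, 3)), (113, 2, (2, 2), (1, 1)), (114, 2, (2, 1), (1, 0)), (115, 2, (1, 1), (1, 1)), (116, 1, (0, 3), (0, 1)), (117, 2, (2, 3), (3, 0)), (118, 2, (2, 3), (0, 3)), (119, 0, (2, 1), (0, 1)), (120, 2, (2, 1), (1, 1))]"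

definition W289_5 :: "(nat \<times> nat \<times> (int \<times> int) \<times> (int \<times> int)) list" where
  "W289_5 = [(121, 0, (0, 0), (1, 1)), (122, 2, (1, 0), (3, 0)), (123, 2, (0, 1), (1, 0)), (124, 2, (2, 3), (1, 1)), (125, 0, (1, 1), (3, 0)), (126, 0, (0, 0), (3, 3)), (127, 1, (1, 0), (1, 0)), (128, 0, (2, 0), (3, 3)), (129, 0, (2, 3), (1, 0)), (130, 0, (3, 0), (0, 3)), (131, 2, (2, 2), (1, 0)), (132, 0, (0, 1), (3, 0)), (133, 2, (3, 0), (3, 0)), (134, 0, (0, 3), (0, 1)), (135, 0, (2, 2), (1, 0)), (136, 0, (3, 3), (3, 3)), (137, 0, (0, 2), (1, 0)), (138, 2, (0, 0), (3, 0)), (139, 2, (1, 0), (0, 1)), (140, 2, (1, 3), (1, 1)), (141, 0, (1, 1), (1, 1)), (142, 1, (2, 2), (0, 1)), (143, 1, (1, 1), (0, 3)), (144, 2, (1, 1), (0, 1))]"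

definition W289_6 :: "(nat \<times> nat \<times> (int \<times> int) \<times> (int \<times> int)) list" where
  "W289_6 = [(145, 2, (2, 1), (0, 3)), (146, 1, (1, 3), (3, 3)), (147, 2, (2, 3), (3, 3)), (148, 0, (2, 0), (1, 0)), (149, 0, (2, 0), (0, 3)), (150, 1, (3, 3), (0, 3)), (151, 2, (0, 0), (0, 3)), (152, 1, (3, 3), (3, 3)), (153, 0, (2, 2), (1, 1)), (154, 1, (2, 2), (1, 1)), (155, 2, (0, 3), (0, 1)), (156, 1, (3, 2), (0, 1)), (157, 0, (2, 3), (0, 1)), (158, 0, (3, 0), (3, 0)), (159, 2, (1, 2), (1, 1)), (160, 1, (0, 2), (1, 1)), (161, 2, (2, 0), (0, 1)), (162, 2, (1, 2), (0, 3)), (163, 1, (1, 0), (0, 1)), (164, 1, (2, 3), (0, 3)), (165, 0, (2, 2), (3, 3)), (166, 2, (2, 0), (3, 3)), (167, 2, (1, 1), (0, 3)), (168, 2, (3, 0), (1, 0))]"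

definition W289_7 :: "(nat \<times> nat \<times> (int \<times> int) \<times> (int \<times> int)) list" where
  "W289_7 = [(169, 0, (1, 2), (3, 0)), (170, 0, (2, 2), (0, 3)), (171, 0, (3, 2), (3, 0)), (172, 0, (0, 0), (0, 3)), (173, 2, (2, 0), (1, 0)), (174, 0, (3, 1), (1, 0)), (175, 2, (3, 2), (3, 0)), (176, 0, (3, 3), (0, 1)), (177, 0, (3, 3), (3, 0)), (178, 0, (1, 3), (1, 1)), (179, 1, (2, 0), (3, 0)), (180, 0, (3, 3), (1, 1)), (181, 0, (0, 1), (1, 0)), (182, 2, (3, 0), (3, 3)), (183, 2, (1, 1), (3, 0)), (184, 2, (0, 0), (1, 0)), (185, 0, (1, 1), (3, 3)), (186, 2, (3, 2), (3, 3)), (187, 0, (1, 0), (0, 1)), (188, 2, (2, 2), (0, 1)), (189, 2, (1, 3), (1, 0)), (190, 1, (0, 0), (0, 3)), (191, 2, (2, 2), (3, 3)), (192, 2, (3, 1), (3, 0))]"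

definition W289_8 :: "(nat \<times> nat \<times> (int \<times> int) \<times> (int \<times> int)) list" where
  "W289_8 = [(193, 2, (3, 3), (3, 3)), (194, 2, (3, 2), (1, 1)), (195, 0, (1, 1), (0, 1)), (196, 0, (1, 3), (3, 0)), (197, 2, (2, 1), (3, 0)), (198, 1, (0, 1), (0, 3)), (199, 0, (0, 2), (3, 3)), (200, 2, (0, 0), (0, 1)), (201, 1, (1, 3), (3, 0)), (202, 1, (0, 2), (1, 0)), (203, 0, (1, 3), (3, 3)), (204, 2, (3, 1), (0, 3)), (205, 1, (0, 2), (3, 3)), (206, 1, (0, 0), (1, 0)), (207, 0, (2, 0), (1, 1)), (208, 0, (0, 3), (3, 3)), (209, 0, (1, 0), (1, 1)), (210, 1, (2, 2), (3, 0)), (211, 2, (0, 2), (1, 1)), (212, 2, (3, 3), (1, 0)), (213, 1, (1, 0), (1, 1)), (214, 2, (2, 3), (1, 0)), (215, 1, (3, 3), (1, 0)), (216, 2, (3, 3), (0, 1))]"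

definition W289_9 :: "(nat \<times> nat \<times> (int \<times> int) \<times> (int \<times> int)) list" where
  "W289_9 = [(217, 1, (1, 3), (0, 1)), (218, 0, (0, 2), (3, 0)), (219, 2, (2, 0), (3, 0)), (220, 1, (2, 1), (0, 3)), (221, 1, (1, 2), (1, 1)), (222, 0, (0, 1), (0, 1)), (223, 0, (0, 0), (1, 0)), (224, 1, (0, 3), (3, 3)), (225, 1, (2, 0), (0, 3)), (226, 1, (1, 1), (3, 3)), (227, 1, (2, 1), (1, 0)), (228, 2, (0, 0), (3, 3)), (229, 1, (0, 1), (1, 1)), (230, 0, (3, 1), (0, 3)), (231, 2, (0, 2), (0, 1)), (232, 1, (3, 2), (0, 3)), (233, 1, (3, 0), (3, 3)), (234, 1, (0, 1), (3, 3)), (235, 0, (2, 1), (1, 0)), (236, 0, (1, 2), (3, 3)), (237, 0, (1, 0), (1, 0)), (238, 0, (1, 0), (3, 3)), (239, 1, (2, 1), (3, 0)), (240, 2, (2, 3), (0, 1))]"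

definition W289_10 :: "(nat \<times> nat \<times> (int \<times> int) \<times> (int \<times> int)) list" where
  "W289_10 = [(241, 2, (0, 2), (1, 0)), (242, 1, (2, 2), (3, 3)), (243, 0, (0, 3), (3, 0)), (244, 2, (0, 1), (3, 3)), (245, 1, (3, 0), (0, 3)), (246, 0, (0, 0), (0, 1)), (247, 0, (1, 3), (0, 1)), (248, 2, (1, 0), (1, 1)), (249, 1, (0, 1), (3, 0)), (250, 0, (3, 0), (1, 1)), (251, 1, (0, 3), (0, 3)), (252, 0, (1, 2), (1, 0)), (253, 2, (1, 0), (0, 3)), (254, 0, (2, 1), (1, 1)), (255, 0, (1, 2), (0, 1)), (256, 2, (1, 0), (3, 3)), (257, 1, (1, 1), (0, 1)), (258, 2, (2, 0), (1, 1)), (259, 2, (1, 2), (0, 1)), (260, 2, (1, 2), (1, 0)), (261, 1, (0, 1), (1, 0)), (262, 1, (0, 2), (0, 3)), (263, 1, (1, 3), (1, 0)), (264, 1, (1, 2), (0, 1))]"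

definition W289_11 :: "(nat \<times> nat \<times> (int \<times> int) \<times> (int \<times> int)) list" where
  "W289_11 = [(265, 0, (2, 3), (0, 3)), (266, 2, (3, 1), (1, 0)), (267, 2, (0, 1), (1, 1)), (268, 1, (2, 0), (3, 3)), (269, 2, (3, 2), (1, 0)), (270, 1, (3, 0), (1, 0)), (271, 0, (3, 3), (0, 3)), (272, 2, (1, 1), (3, 3)), (273, 1, (1, 0), (3, 3)), (274, 1, (3, 1), (0, 3)), (275, 2, (3, 1), (1, 1)), (276, 0, (1, 2), (1, 1)), (277, 1, (3, 3), (3, 0)), (278, 0, (2, 0), (0, 1)), (279, 1, (0, 2), (3, 0)), (280, 2, (0, 2), (0, 3)), (281, 1, (0, 0), (3, 3)), (282, 1, (3, 1), (3, 3)), (283, 2, (3, 2), (0, 3)), (284, 0, (2, 1), (3, 0)), (285, 0, (2, 3), (3, 0)), (286, 2, (0, 3), (1, 0)), (287, 0, (3, 2), (0, 3)), (288, 2, (3, 2), (0, 1))]"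

definition W289 :: "(nat \<times> nat \<times> (int \<times> int) \<times> (int \<times> int)) list" where
  "W289 = W289_0 @ W289_1 @ W289_2 @ W289_3 @ W289_4 @ W289_5 @ W289_6 @ W289_7 @ W289_8 @ W289_9 @ W289_10 @ W289_11"

definition chk289 :: "nat \<times> nat \<times> (int \<times> int) \<times> (int \<times> int) \<Rightarrow> bool" where
  "chk289 = (\<lambda>(d,i,u,c). i < 3 \<and> u \<in> set Vlist \<and> c \<in> set connlist \<and> mi2 17 (lookupF Fs289 i (addc u c)) (lookupF Fs289 i u) = d)"

lemma W289_0_ok: "list_all chk289 W289_0" unfolding chk289_def by code_simp

lemma W289_1_ok: "list_all chk289 W289_1" unfolding chk289_def by code_simp

lemma W289_2_ok: "list_all chk289 W289_2" unfolding chk289_def by code_simp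

lemma W289_3_ok: "list_all chk289 W289_3" unfolding chk289_def by code_simp

lemma W289_4_ok: "list_all chk289 W289_4" unfolding chk289_def by code_simp

lemma W289_5_ok: "list_all chk289 W289_5" unfolding chk289_def by code_simp

lemma W289_6_ok: "list_all chk289 W289_6" unfolding chk289_def by code_simp

lemma W289_7_ok: "list_all chk289 W289_7" unfolding chk289_def by code_simp

lemma W289_8_ok: "list_all chk289 W289_8" unfolding chk289_def by code_simp

lemma W289_9_ok: "list_all chk289 W289_9" unfolding chk289_def by code_simp

lemma W289_10_ok: "list_all chk289 W289_10" unfolding chk289_def by code_simp

lemma W289_11_ok: "list_all chk289 W289_11" unfolding chk289_def by code_simp

lemma W289_ok: "list_all chk289 W289"
  unfolding W289_def list_all_append using W289_0_ok W289_1_ok W289_2_ok W289_3_ok W289_4_ok W289_5_ok W289_6_ok W289_7_ok W289_8_ok W289_9_ok W289_10_ok W289_11_ok by blast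

lemma n289: "\<exists>D. shrikhande_design 289 D \<and> finite D \<and> card D = 289 * (289 - 1) div 96"
proof (rule design_from_lists[where pl = "pl2 17" and mi = "mi2 17" and k = 3 and Fs = Fs289 and W = W289])
  show "\<And>x t. x < 289 \<Longrightarrow> t < 289 \<Longrightarrow> pl2 17 x t < 289" using pl2_in[of _ 17] by simp
  show "\<And>x y. x < 289 \<Longrightarrow> y < 289 \<Longrightarrow> mi2 17 y x < 289" using mi2_in[of _ 17] by simp
  show "\<And>a t s. a < 289 \<Longrightarrow> t < 289 \<Longrightarrow> s < 289 \<Longrightarrow> pl2 17 a t = pl2 17 a s \<Longrightarrow> t = s"
    using pl2_cancel1[of _ 17] by simp
  show "\<And>a b t. a < 289 \<Longrightarrow> b < 289 \<Longrightarrow> t < 289 \<Longrightarrow> pl2 17 a t = pl2 17 b t \<Longrightarrow> a = b"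
    using pl2_cancel2[of _ 17] by simp
  show "\<And>a b t. a < 289 \<Longrightarrow> b < 289 \<Longrightarrow> t < 289 \<Longrightarrow> mi2 17 (pl2 17 b t) (pl2 17 a t) = mi2 17 b a"
    using mi2_pl2[of _ 17] by simp
  show "\<And>a x. a < 289 \<Longrightarrow> x < 289 \<Longrightarrow> pl2 17 a (mi2 17 x a) = x" using pl2_mi2[of _ 17] by simp
  show "\<And>x. x < 289 \<Longrightarrow> pl2 17 x 0 = x" using pl2_0[of _ 17] by simp
  show "289 = 96 * 3 + (1::nat)" by simp
  show "list_all (\<lambda>i. list_all (\<lambda>v. lookupF Fs289 i v < 289) Vlist \<and> distinct (map (lookupF Fs289 i) Vlist)) [0..<3]"
    by code_simp
  show "map fst W289 = [1..<289]" by code_simp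
  show "list_all (\<lambda>(d,i,u,c). i < 3 \<and> u \<in> set Vlist \<and> c \<in> set connlist \<and> mi2 17 (lookupF Fs289 i (addc u c)) (lookupF Fs289 i u) = d) W289"
    using W289_ok unfolding chk289_def .
qed

theorem lemma2p3:
  assumes "n \<in> {97, 193, 289 :: nat}"
  shows "\<exists>D. shrikhande_design n D \<and> finite D \<and> card D = n * (n - 1) div 96"
  using assms n97 n193 n289 by auto

end
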